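(* Let $X_t\subset X_{t+p}$ be finite simplicial complexes with oriented simplices (orientations on $X_t$ inherited), whose vertices $v_i$ carry nonzero real labels $q_i$, and let $F$ be a nowhere-zero real function on the simplices of $X_{t+p}$. Let $\mathscr{S}_{t+p}$ be the labeled sheaf on $X_{t+p}$ determined by $(q_i)$ and $F$, and $\mathscr{S}_t$ its pullback (equivalently, the labeled sheaf on $X_t$ determined by the same data). Let $c$ be a nonzero real number, and let $\mathscr{S}'_{t+p},\mathscr{S}'_t$ be the sheaves obtained in the same way after replacing every label $q_i$ by $c\,q_i$. Then the spectrum of every persistent sheaf Laplacian $\Delta_q^{t,p}$ for the primed sheaves is obtained from that of the unprimed sheaves by multiplying every eigenvalue by $c^2$.
   Context: Labeled sheaf: every stalk is $\mathbb{R}$ (standard inner product, distinct stalks orthogonal), and for a face relation $\sigma=[v_0,\dots,v_n]\leqslant\tau=[v_0,\dots,v_n,v_{n+1},\dots,v_m]$ the restriction map is multiplication by $F(\sigma)\,q_{n+1}\cdots q_m/F(\tau)$ (product of labels of the vertices of $\tau$ not in $\sigma$). The pullback to $X_t$ has the same stalks and restriction maps on $X_t$. $C^q(X;\mathscr{S})=\bigoplus_{\dim\sigma=q}\mathscr{S}(\sigma)$, and $C^q(X_t;\mathscr{S}_t)$ is the subspace of $C^q(X_{t+p};\mathscr{S}_{t+p})$ spanned by stalks over simplices of $X_t$. Signed incidence: for $\tau=[v_0,\dots,v_n]$, $\sigma=[v_0,\dots,\hat v_i,\dots,v_n]$, $[\sigma:\tau]=(-1)^i$ (or $(-1)^{i+1}$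 if $\sigma$ oppositely oriented), $0$ if not a codimension-one face. Coboundary $d_q|_{\mathscr{S}(\sigma)}=\sum_{\sigma\leqslant\tau}[\sigma:\tau]\mathscr{S}_{\sigma\leqslant\tau}$; $d^t,d^{t+p}$ denote those of the two complexes. With $\mathbb{C}^{t,p}_{q+1}=\{e\in C^{q+1}(X_{t+p};\mathscr{S}_{t+p}) : (d_q^{t+p})^*(e)\in C^q(X_t;\mathscr{S}_t)\}$ and $\eth_q^{t,p}$ the adjoint of $(d_q^{t+p})^*|_{\mathbb{C}^{t,p}_{q+1}}$, the persistent sheaf Laplacian is $\Delta_q^{t,p}=(\eth_q^{t,p})^*\eth_q^{t,p}+d_{q-1}^t(d_{q-1}^t)^*$ on $C^q(X_t;\mathscr{S}_t)$. *)

theory Defs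
  imports "HOL-Analysis.Analysis" "HOL-Library.Function_Algebras"
begin

text \<open>An oriented simplex is a list of distinct vertices; the order of the list is its orientation. The dimension of a simplex s is length s - 1.\<close>

definition simplicial_complex :: "'v list set \<Rightarrow> bool" where
  "simplicial_complex K \<longleftrightarrow> finite K
     \<and> (\<forall>s\<in>K. s \<noteq> [] \<and> distinct s)
     \<and> (\<forall>s\<in>K. \<forall>s'\<in>K. set s = set s' \<longrightarrow> s = s')
     \<and> (\<forall>s\<in>K. \<forall>A. A \<noteq> {} \<and> A \<subseteq> set s \<longrightarrow> (\<exists>s'\<in>K. set s' = A))"

definition vertices :: "'v list set \<Rightarrow> 'v set" where
  "vertices K = (\<Union>s\<in>K. set s)"

definition pos :: "'v list \<Rightarrow> 'v \<Rightarrow> nat" where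
  "pos ys x = (THE k. k < length ys \<and> ys ! k = x)"

definition perm_sign :: "'v list \<Rightarrow> 'v list \<Rightarrow> real" where
  "perm_sign xs ys = (-1) ^ card {(i, j). i < j \<and> j < length xs \<and> pos ys (xs ! j) < pos ys (xs ! i)}"

text \<open>Signed incidence [sigma : tau]: if tau = [v0,...,vn] and sigma is the face obtained by
  deleting v_i, it is (-1)^i, times -1 if sigma is oppositely oriented; 0 otherwise.\<close>
definition incidence :: "'v list \<Rightarrow> 'v list \<Rightarrow> real" where
  "incidence \<sigma> \<tau> =
     (if length \<tau> = length \<sigma> + 1 \<and> set \<sigma> \<subseteq> set \<tau> then
        (let i = (THE i. i < length \<tau> \<and> \<tau> ! i \<notin> set \<sigma>);
             \<tau>' = take i \<tau> @ drop (Suc i) \<tau>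
         in (-1) ^ i * perm_sign \<sigma> \<tau>')
      else 0)"

definition labeled_restr :: "('v \<Rightarrow> real) \<Rightarrow> ('v list \<Rightarrow> real) \<Rightarrow> 'v list \<Rightarrow> 'v list \<Rightarrow> real" where
  "labeled_restr lab F \<sigma> \<tau> = F \<sigma> * (\<Prod>v\<in>set \<tau> - set \<sigma>. lab v) / F \<tau>"

text \<open>Cochains are functions on oriented simplices (each stalk is R); C^q(K) consists of those
  supported on the q-simplices of K.\<close>
definition cochains :: "'v list set \<Rightarrow> nat \<Rightarrow> ('v list \<Rightarrow> real) set" where
  "cochains K q = {f. \<forall>s. f s \<noteq> 0 \<longrightarrow> s \<in> K \<and> length s = q + 1}"

definition ip :: "'v list set \<Rightarrow> ('v list \<Rightarrow> real) \<Rightarrow> ('v list \<Rightarrow> real) \<Rightarrow> real" where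
  "ip S f g = (\<Sum>s\<in>S. f s * g s)"

definition coboundary :: "'v list set \<Rightarrow> ('v list \<Rightarrow> 'v list \<Rightarrow> real) \<Rightarrow> nat
    \<Rightarrow> ('v list \<Rightarrow> real) \<Rightarrow> ('v list \<Rightarrow> real)" where
  "coboundary K \<rho> q f = (\<lambda>\<tau>. if \<tau> \<in> K \<and> length \<tau> = q + 2
      then (\<Sum>\<sigma>\<in>{\<sigma>\<in>K. length \<sigma> = q + 1}. incidence \<sigma> \<tau> * \<rho> \<sigma> \<tau> * f \<sigma>) else 0)"

definition adjoint_on :: "'v list set \<Rightarrow> ('v list \<Rightarrow> real) set
    \<Rightarrow> (('v list \<Rightarrow> real) \<Rightarrow> ('v list \<Rightarrow> real)) \<Rightarrow> ('v list \<Rightarrow> real) \<Rightarrow> ('v list \<Rightarrow> real)" where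
  "adjoint_on S W T g = (THE h. h \<in> W \<and> (\<forall>f\<in>W. ip S h f = ip S g (T f)))"

text \<open>Xt \<subseteq> Xtp, sheaf restriction maps rho (the same on both complexes: pullback),
  degree q. Ambient inner product sums over Xtp.\<close>

definition pers_space :: "'v list set \<Rightarrow> 'v list set \<Rightarrow> ('v list \<Rightarrow> 'v list \<Rightarrow> real) \<Rightarrow> nat
    \<Rightarrow> ('v list \<Rightarrow> real) set" where
  "pers_space Xt Xtp \<rho> q =
     {e \<in> cochains Xtp (q + 1).
        adjoint_on Xtp (cochains Xtp q) (coboundary Xtp \<rho> q) e \<in> cochains Xt q}"

definition eth :: "'v list set \<Rightarrow> 'v list set \<Rightarrow> ('v list \<Rightarrow> 'v list \<Rightarrow> real) \<Rightarrow> nat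
    \<Rightarrow> ('v list \<Rightarrow> real) \<Rightarrow> ('v list \<Rightarrow> real)" where
  "eth Xt Xtp \<rho> q = adjoint_on Xtp (pers_space Xt Xtp \<rho> q)
      (adjoint_on Xtp (cochains Xtp q) (coboundary Xtp \<rho> q))"

text \<open>Delta_q^{t,p} = eth^* eth + d_{q-1}^t (d_{q-1}^t)^*  on C^q(Xt);
  the second term is absent for q = 0 (C^{-1} = 0).\<close>
definition pers_laplacian :: "'v list set \<Rightarrow> 'v list set \<Rightarrow> ('v list \<Rightarrow> 'v list \<Rightarrow> real) \<Rightarrow> nat
    \<Rightarrow> ('v list \<Rightarrow> real) \<Rightarrow> ('v list \<Rightarrow> real)" where
  "pers_laplacian Xt Xtp \<rho> q f =
     adjoint_on Xtp (cochains Xt q) (eth Xt Xtp \<rho> q) (eth Xt Xtp \<rho> q f)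
     + (if q = 0 then 0 else
          coboundary Xt \<rho> (q - 1)
            (adjoint_on Xtp (cochains Xt (q - 1)) (coboundary Xt \<rho> (q - 1)) f))"

definition eigenspace_on :: "('v list \<Rightarrow> real) set \<Rightarrow> (('v list \<Rightarrow> real) \<Rightarrow> ('v list \<Rightarrow> real))
    \<Rightarrow> real \<Rightarrow> ('v list \<Rightarrow> real) set" where
  "eigenspace_on V L mu = {f \<in> V. L f = (\<lambda>s. mu * f s)}"

text \<open>Spectrum of L on V (set of eigenvalues) and multiplicity of an eigenvalue
  (dimension of the eigenspace; L is self-adjoint so this is the algebraic multiplicity).\<close>
definition spectrum_on :: "('v list \<Rightarrow> real) set \<Rightarrow> (('v list \<Rightarrow> real) \<Rightarrow> ('v list \<Rightarrow> real)) \<Rightarrow> real set" where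
  "spectrum_on V L = {mu. \<exists>f\<in>eigenspace_on V L mu. f \<noteq> 0}"

definition eig_mult :: "('v list \<Rightarrow> real) set \<Rightarrow> (('v list \<Rightarrow> real) \<Rightarrow> ('v list \<Rightarrow> real)) \<Rightarrow> real \<Rightarrow> nat" where
  "eig_mult V L mu = vector_space.dim (\<lambda>r f s. r * f s) (eigenspace_on V L mu)"

end

theory Submission
  imports Defs
begin

interpretation fv: vector_space "(\<lambda>r (f::'a \<Rightarrow> real) s. r * f s)"
  by unfold_locales (auto simp: fun_eq_iff algebra_simps)

definition supp :: "'a set \<Rightarrow> ('a \<Rightarrow> real) set" where
  "supp S = {f. \<forall>s. f s \<noteq> 0 \<longrightarrow> s \<in> S}"

definition lin_fun :: "('a \<Rightarrow> real) set \<Rightarrow> (('a \<Rightarrow> real) \<Rightarrow> real) \<Rightarrow> bool" where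
  "lin_fun W \<phi> \<longleftrightarrow> (\<forall>f\<in>W. \<forall>g\<in>W. \<phi> (f + g) = \<phi> f + \<phi> g) \<and> (\<forall>a. \<forall>f\<in>W. \<phi> (\<lambda>s. a * f s) = a * \<phi> f)"

definition lin_map :: "('a \<Rightarrow> real) set \<Rightarrow> (('a \<Rightarrow> real) \<Rightarrow> ('b \<Rightarrow> real)) \<Rightarrow> bool" where
  "lin_map W T \<longleftrightarrow> (\<forall>f\<in>W. \<forall>g\<in>W. T (f + g) = T f + T g) \<and> (\<forall>a. \<forall>f\<in>W. T (\<lambda>s. a * f s) = (\<lambda>s. a * T f s))"

lemma lin_fun_mono: "lin_fun W \<phi> \<Longrightarrow> V \<subseteq> W \<Longrightarrow> lin_fun V \<phi>"
  unfolding lin_fun_def by blast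

lemma lin_map_mono: "lin_map W T \<Longrightarrow> V \<subseteq> W \<Longrightarrow> lin_map V T"
  unfolding lin_map_def by blast

lemma ip_add_left: "ip S (f + g) h = ip S f h + ip S g h"
  unfolding ip_def by (simp add: sum.distrib distrib_right)
lemma ip_add_right: "ip S h (f + g) = ip S h f + ip S h g"
  unfolding ip_def by (simp add: sum.distrib distrib_left)
lemma ip_diff_left: "ip S (f - g) h = ip S f h - ip S g h"
  unfolding ip_def by (simp add: sum_subtractf left_diff_distrib)
lemma ip_scale_left: "ip S (\<lambda>s. a * f s) g = a * ip S f g"
  unfolding ip_def by (simp add: sum_distrib_left mult.assoc)
lemma ip_scale_right: "ip S g (\<lambda>s. a * f s) = a * ip S g f"
  unfolding ip_def by (simp add: sum_distrib_left algebra_simps)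
lemma ip_sym: "ip S f g = ip S g f"
  unfolding ip_def by (simp add: mult.commute)
lemma ip_zero_left: "ip S 0 g = 0"
  unfolding ip_def by simp

lemma ip_pos:
  assumes "finite S" "f \<in> supp S" "ip S f f = 0" shows "f = 0"
proof -
  have "\<forall>s\<in>S. f s * f s = 0"
    using assms(3) unfolding ip_def by (subst (asm) sum_nonneg_eq_0_iff) (auto simp: assms(1))
  then show ?thesis using assms(2) unfolding supp_def by (auto simp: fun_eq_iff)
qed

lemma supp_subspace: "fv.subspace (supp S)"
  unfolding fv.subspace_def supp_def by (auto, metis add.left_neutral)

lemma lin_fun_ip: "lin_map W T \<Longrightarrow> lin_fun W (\<lambda>f. ip S g (T f))"
  unfolding lin_fun_def lin_map_def by (simp add: ip_add_right ip_scale_right)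

lemma lin_fun_ip': "lin_fun W (\<lambda>f. ip S g f)"
  unfolding lin_fun_def by (simp add: ip_add_right ip_scale_right)

lemma lin_fun_zero: "lin_fun W \<phi> \<Longrightarrow> 0 \<in> W \<Longrightarrow> \<phi> 0 = 0"
  unfolding lin_fun_def by (metis (no_types) add_cancel_right_right add_0)

lemma riesz_fin:
  assumes "finite B"
  shows "B \<subseteq> supp S \<Longrightarrow> finite S \<Longrightarrow> lin_fun (fv.span B) \<phi>
     \<Longrightarrow> \<exists>h\<in>fv.span B. \<forall>f\<in>fv.span B. ip S h f = \<phi> f"
  using assms
proof (induction B arbitrary: \<phi> rule: finite_induct)
  case empty
  have "\<phi> 0 = 0" using lin_fun_zero[OF empty(3)] fv.span_zero by blast
  then show ?case by (auto simp: ip_def zero_fun_def)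
next
  case (insert b B)
  have sub: "fv.span B \<subseteq> fv.span (insert b B)" by (rule fv.span_mono) auto
  have spS: "fv.span B \<subseteq> supp S"
    using insert(4) by (intro fv.span_minimal supp_subspace) auto
  have bS: "b \<in> supp S" using insert(4) by auto
  obtain h' where h': "h' \<in> fv.span B" "\<forall>f\<in>fv.span B. ip S h' f = \<phi> f"
    using insert(3)[of \<phi>] insert(4,5) lin_fun_mono[OF insert(6) sub] by auto
  obtain p where p: "p \<in> fv.span B" "\<forall>f\<in>fv.span B. ip S p f = ip S b f"
    using insert(3)[of "\<lambda>f. ip S b f"] insert(4,5) lin_fun_ip' by auto
  define u where "u = b - p"
  have bsp: "b \<in> fv.span (insert b B)" by (simp add: fv.span_base)
  have usp: "u \<in> fv.span (insert b B)" unfolding u_def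
    using fv.span_diff[OF bsp] p(1) sub by blast
  have uS: "u \<in> supp S" unfolding u_def using bS p(1) spS unfolding supp_def by auto (metis (mono_tags, lifting) in_mono mem_Collect_eq)
  have uorth: "ip S u g = 0" if "g \<in> fv.span B" for g
    using p(2) that by (simp add: u_def ip_diff_left)
  show ?case
  proof (cases "ip S u u = 0")
    case True
    then have "u = 0" using ip_pos[OF insert(5) uS] by simp
    then have bp: "b = p" unfolding u_def by simp
    have "fv.span (insert b B) \<subseteq> fv.span B"
    proof
      fix f assume "f \<in> fv.span (insert b B)"
      then obtain k where k: "f - (\<lambda>s. k * b s) \<in> fv.span B" by (auto simp: fv.span_breakdown_eq)
      have "(\<lambda>s. k * b s) \<in> fv.span B" using bp p(1) fv.span_scale by blast
      from fv.span_add[OF k this] show "f \<in> fv.span B" by simp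
    qed
    then show ?thesis using h' sub by blast
  next
    case False
    define t where "t = (\<phi> u - ip S h' u) / ip S u u"
    define h where "h = h' + (\<lambda>s. t * u s)"
    have hsp: "h \<in> fv.span (insert b B)" unfolding h_def
      using fv.span_add[OF _ fv.span_scale[OF usp]] h'(1) sub by blast
    have "ip S h u = ip S h' u + t * ip S u u" unfolding h_def
      by (simp only: ip_add_left ip_scale_left)
    then have hu: "ip S h u = \<phi> u" using False by (simp add: t_def)
    have "ip S h f = \<phi> f" if f: "f \<in> fv.span (insert b B)" for f
    proof -
      obtain k where k: "f - (\<lambda>s. k * b s) \<in> fv.span B" using f by (auto simp: fv.span_breakdown_eq)
      define g' where "g' = (f - (\<lambda>s. k * b s)) + (\<lambda>s. k * p s)"
      have g': "g' \<in> fv.span B" unfolding g'_def using fv.span_add[OF k fv.span_scale[OF p(1)]] .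
      have feq: "f = g' + (\<lambda>s. k * u s)" unfolding g'_def u_def by (auto simp: fun_eq_iff algebra_simps)
      have "ip S h g' = \<phi> g'" unfolding h_def
        using h'(2) g' uorth[OF g'] by (simp add: ip_add_left ip_scale_left)
      then have "ip S h f = \<phi> g' + k * \<phi> u" using hu feq by (simp add: ip_add_right ip_scale_right)
      also have "\<dots> = \<phi> f"
      proof -
        have g2: "g' \<in> fv.span (insert b B)" using g' sub by blast
        have u2: "(\<lambda>s. k * u s) \<in> fv.span (insert b B)" using fv.span_scale[OF usp] .
        have "\<phi> f = \<phi> g' + \<phi> (\<lambda>s. k * u s)"
          using insert(6) g2 u2 unfolding lin_fun_def by (subst feq) blast
        moreover have "\<phi> (\<lambda>s. k * u s) = k * \<phi> u"
          using insert(6) usp unfolding lin_fun_def by blast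
        ultimately show ?thesis by simp
      qed
      finally show ?thesis .
    qed
    then show ?thesis using hsp by blast
  qed
qed

definition delta :: "'a \<Rightarrow> 'a \<Rightarrow> real" where "delta s = (\<lambda>x. if x = s then 1 else 0)"

lemma supp_span:
  assumes "finite S" shows "supp S \<subseteq> fv.span (delta ` S)"
  using assms
proof (induction S rule: finite_induct)
  case empty
  show ?case
  proof
    fix f assume "f \<in> supp {}"
    then have "f = 0" by (auto simp: supp_def fun_eq_iff)
    then show "f \<in> fv.span (delta ` {})" using fv.span_zero by simp
  qed
next
  case (insert a S)
  show ?case
  proof
    fix f assume f: "f \<in> supp (insert a S)"
    have "f - (\<lambda>s. f a * delta a s) \<in> supp S" using f unfolding supp_def delta_def by auto
    then have "f - (\<lambda>s. f a * delta a s) \<in> fv.span (delta ` S)" using insert(3) by blast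
    then show "f \<in> fv.span (delta ` insert a S)" by (auto simp: fv.span_breakdown_eq)
  qed
qed

lemma riesz:
  assumes "finite S" "fv.subspace W" "W \<subseteq> supp S" "lin_fun W \<phi>"
  shows "\<exists>h\<in>W. \<forall>f\<in>W. ip S h f = \<phi> f"
proof -
  obtain B where B: "B \<subseteq> W" "fv.independent B" "W \<subseteq> fv.span B" "card B = fv.dim W"
    by (rule fv.basis_exists[of W])
  have "B \<subseteq> fv.span (delta ` S)" using B(1) assms(3) supp_span[OF assms(1)] by blast
  then have fin: "finite B"
    using fv.independent_span_bound[of "delta ` S" B] B(2) assms(1) by simp
  have WB: "fv.span B = W" by (rule fv.span_subspace[OF B(1) B(3) assms(2)])
  have "B \<subseteq> supp S" using B(1) assms(3) by blast
  then show ?thesis using riesz_fin[OF fin, of S \<phi>] assms(1,4) unfolding WB by blast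
qed

lemma adj_eqI:
  assumes "finite S" "fv.subspace W" "W \<subseteq> supp S"
    and h: "h \<in> W" "\<forall>f\<in>W. ip S h f = ip S g (T f)"
  shows "adjoint_on S W T g = h"
  unfolding adjoint_on_def
proof (rule the_equality)
  show "h \<in> W \<and> (\<forall>f\<in>W. ip S h f = ip S g (T f))" using h by blast
  fix h' assume h': "h' \<in> W \<and> (\<forall>f\<in>W. ip S h' f = ip S g (T f))"
  have d: "h' - h \<in> W" using h(1) h' assms(2) fv.subspace_diff by blast
  have "ip S (h' - h) (h' - h) = 0" using h' h d by (simp add: ip_diff_left)
  then have "h' - h = 0" using ip_pos[OF assms(1)] d assms(3) by blast
  then show "h' = h" by simp
qed

lemma adj_exists:
  assumes "finite S" "fv.subspace W" "W \<subseteq> supp S" "lin_map W T"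
  shows "adjoint_on S W T g \<in> W \<and> (\<forall>f\<in>W. ip S (adjoint_on S W T g) f = ip S g (T f))"
proof -
  obtain h where h: "h \<in> W" "\<forall>f\<in>W. ip S h f = ip S g (T f)"
    using riesz[OF assms(1-3) lin_fun_ip[OF assms(4)]] by blast
  show ?thesis using adj_eqI[OF assms(1-3) h] h by simp
qed

lemma adj_lin:
  assumes "finite S" "fv.subspace W" "W \<subseteq> supp S" "lin_map W T"
  shows "lin_map UNIV (adjoint_on S W T)"
  unfolding lin_map_def
proof (intro conjI ballI allI)
  note E = adj_exists[OF assms]
  fix g1 g2 :: "'a list \<Rightarrow> real"
  show "adjoint_on S W T (g1 + g2) = adjoint_on S W T g1 + adjoint_on S W T g2"
  proof (rule adj_eqI[OF assms(1-3)])
    show "adjoint_on S W T g1 + adjoint_on S W T g2 \<in> W"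
      using E[of g1] E[of g2] assms(2) fv.subspace_add by blast
    show "\<forall>f\<in>W. ip S (adjoint_on S W T g1 + adjoint_on S W T g2) f = ip S (g1 + g2) (T f)"
      using E[of g1] E[of g2] by (simp only: ip_add_left) simp
  qed
next
  note E = adj_exists[OF assms]
  fix a and g :: "'a list \<Rightarrow> real"
  show "adjoint_on S W T (\<lambda>s. a * g s) = (\<lambda>s. a * adjoint_on S W T g s)"
  proof (rule adj_eqI[OF assms(1-3)])
    show "(\<lambda>s. a * adjoint_on S W T g s) \<in> W"
      using E[of g] assms(2) fv.subspace_scale by blast
    show "\<forall>f\<in>W. ip S (\<lambda>s. a * adjoint_on S W T g s) f = ip S (\<lambda>s. a * g s) (T f)"
      using E[of g] by (simp only: ip_scale_left) simp
  qed
qed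

lemma adj_scale_op:
  assumes "finite S" "fv.subspace W" "W \<subseteq> supp S" "lin_map W T"
  shows "adjoint_on S W (\<lambda>f s. c * T f s) g = (\<lambda>s. c * adjoint_on S W T g s)"
proof (rule adj_eqI[OF assms(1-3)])
  note E = adj_exists[OF assms, of g]
  show "(\<lambda>s. c * adjoint_on S W T g s) \<in> W"
    using E assms(2) fv.subspace_scale by blast
  show "\<forall>f\<in>W. ip S (\<lambda>s. c * adjoint_on S W T g s) f = ip S g ((\<lambda>f s. c * T f s) f)"
  proof
    fix f assume f: "f \<in> W"
    have "ip S (\<lambda>s. c * adjoint_on S W T g s) f = c * ip S (adjoint_on S W T g) f"
      by (rule ip_scale_left)
    also have "\<dots> = c * ip S g (T f)" using E f by simp
    also have "\<dots> = ip S g ((\<lambda>f s. c * T f s) f)" by (simp add: ip_scale_right)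
    finally show "ip S (\<lambda>s. c * adjoint_on S W T g s) f = ip S g ((\<lambda>f s. c * T f s) f)" .
  qed
qed



lemma cob_lin: "lin_map W (coboundary K \<rho> q)"
  unfolding lin_map_def coboundary_def
  by (auto simp: fun_eq_iff sum.distrib sum_distrib_left algebra_simps)

lemma cochains_subspace: "fv.subspace (cochains K q)"
  unfolding fv.subspace_def cochains_def by (auto, metis add.left_neutral, metis add.right_neutral)

lemma cochains_supp: "K \<subseteq> S \<Longrightarrow> cochains K q \<subseteq> supp S"
  unfolding cochains_def supp_def by auto

lemma restr_scale:
  assumes "simplicial_complex K" "\<sigma> \<in> K" "\<tau> \<in> K" "length \<tau> = length \<sigma> + 1" "set \<sigma> \<subseteq> set \<tau>"
  shows "labeled_restr (\<lambda>v. c * lab v) F \<sigma> \<tau> = c * labeled_restr lab F \<sigma> \<tau>"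
proof -
  have d: "distinct \<sigma>" "distinct \<tau>" using assms(1-3) unfolding simplicial_complex_def by auto
  have "card (set \<tau> - set \<sigma>) = card (set \<tau>) - card (set \<sigma>)"
    using assms(5) by (simp add: card_Diff_subset)
  also have "\<dots> = 1" using d assms(4) by (simp add: distinct_card)
  finally have c1: "card (set \<tau> - set \<sigma>) = 1" .
  have "(\<Prod>v\<in>set \<tau> - set \<sigma>. c * lab v) = c ^ card (set \<tau> - set \<sigma>) * (\<Prod>v\<in>set \<tau> - set \<sigma>. lab v)"
    by (simp add: prod.distrib)
  then show ?thesis unfolding labeled_restr_def using c1 by simp
qed

lemma cob_scale:
  assumes "simplicial_complex K"
  shows "coboundary K (labeled_restr (\<lambda>v. c * lab v) F) q = (\<lambda>f \<tau>. c * coboundary K (labeled_restr lab F) q f \<tau>)"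
proof (intro ext)
  fix f \<tau>
  show "coboundary K (labeled_restr (\<lambda>v. c * lab v) F) q f \<tau> = c * coboundary K (labeled_restr lab F) q f \<tau>"
  proof (cases "\<tau> \<in> K \<and> length \<tau> = q + 2")
    case True
    have "incidence \<sigma> \<tau> * labeled_restr (\<lambda>v. c * lab v) F \<sigma> \<tau> * f \<sigma> = c * (incidence \<sigma> \<tau> * labeled_restr lab F \<sigma> \<tau> * f \<sigma>)"
      if "\<sigma> \<in> {\<sigma> \<in> K. length \<sigma> = q + 1}" for \<sigma>
    proof (cases "incidence \<sigma> \<tau> = 0")
      case False
      then have "set \<sigma> \<subseteq> set \<tau>" unfolding incidence_def by (auto split: if_splits)
      then show ?thesis using restr_scale[OF assms, of \<sigma> \<tau> c lab F] that True by simp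
    qed simp
    note eq = this
    have "(\<Sum>\<sigma>\<in>{\<sigma> \<in> K. length \<sigma> = q + 1}. incidence \<sigma> \<tau> * labeled_restr (\<lambda>v. c * lab v) F \<sigma> \<tau> * f \<sigma>)
      = (\<Sum>\<sigma>\<in>{\<sigma> \<in> K. length \<sigma> = q + 1}. c * (incidence \<sigma> \<tau> * labeled_restr lab F \<sigma> \<tau> * f \<sigma>))"
      by (rule sum.cong[OF refl eq])
    then show ?thesis using True unfolding coboundary_def by (simp add: sum_distrib_left)
  qed (auto simp: coboundary_def)
qed

lemma lin_map_zero: "lin_map UNIV T \<Longrightarrow> T 0 = 0"
  unfolding lin_map_def
  by (metis (no_types) add_cancel_right_right iso_tuple_UNIV_I)

lemma scale_cochains: "c \<noteq> 0 \<Longrightarrow> (\<lambda>s. c * g s) \<in> cochains K q \<longleftrightarrow> g \<in> cochains K q"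
  unfolding cochains_def by auto


lemma lap_scale:
  fixes \<rho> \<rho>' :: "'v list \<Rightarrow> 'v list \<Rightarrow> real"
  assumes fin: "finite Xtp" and sub: "Xt \<subseteq> Xtp" and c: "c \<noteq> 0"
    and d1: "coboundary Xtp \<rho>' q = (\<lambda>f \<tau>. c * coboundary Xtp \<rho> q f \<tau>)"
    and d2: "coboundary Xt \<rho>' (q-1) = (\<lambda>f \<tau>. c * coboundary Xt \<rho> (q-1) f \<tau>)"
  shows "pers_laplacian Xt Xtp \<rho>' q f = (\<lambda>s. c^2 * pers_laplacian Xt Xtp \<rho> q f s)"
proof -
  define Cq where "Cq = cochains Xtp q"
  define A where "A = adjoint_on Xtp Cq (coboundary Xtp \<rho> q)"
  have Cq: "fv.subspace Cq" "Cq \<subseteq> supp Xtp" unfolding Cq_def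
    by (rule cochains_subspace, rule cochains_supp[OF order_refl])
  have A': "adjoint_on Xtp Cq (coboundary Xtp \<rho>' q) = (\<lambda>g s. c * A g s)"
    unfolding d1 A_def by (rule ext, rule adj_scale_op[OF fin Cq cob_lin])
  have Alin: "lin_map UNIV A" unfolding A_def by (rule adj_lin[OF fin Cq cob_lin])
  define P where "P = pers_space Xt Xtp \<rho> q"
  have PA: "P = {e \<in> cochains Xtp (q+1). A e \<in> cochains Xt q}"
    unfolding P_def pers_space_def A_def Cq_def ..
  have P': "pers_space Xt Xtp \<rho>' q = P"
  proof -
    have "\<forall>e. (\<lambda>s. c * A e s) \<in> cochains Xt q \<longleftrightarrow> A e \<in> cochains Xt q"
      using scale_cochains[OF c] by blast
    then show ?thesis unfolding PA pers_space_def A'[unfolded Cq_def] by simp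
  qed
  have Psub: "fv.subspace P"
    unfolding PA fv.subspace_def
  proof (intro conjI ballI allI)
    show "0 \<in> {e \<in> cochains Xtp (q + 1). A e \<in> cochains Xt q}"
      using lin_map_zero[OF Alin] by (simp add: cochains_def)
  next
    fix x y assume "x \<in> {e \<in> cochains Xtp (q + 1). A e \<in> cochains Xt q}" "y \<in> {e \<in> cochains Xtp (q + 1). A e \<in> cochains Xt q}"
    then have x: "x \<in> cochains Xtp (q + 1)" "A x \<in> cochains Xt q"
      and y: "y \<in> cochains Xtp (q + 1)" "A y \<in> cochains Xt q" by auto
    have "A (x + y) = A x + A y" using Alin unfolding lin_map_def by blast
    then show "x + y \<in> {e \<in> cochains Xtp (q + 1). A e \<in> cochains Xt q}"
      using fv.subspace_add[OF cochains_subspace x(1) y(1)] fv.subspace_add[OF cochains_subspace x(2) y(2)] by simp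
  next
    fix a x assume "x \<in> {e \<in> cochains Xtp (q + 1). A e \<in> cochains Xt q}"
    then have x: "x \<in> cochains Xtp (q + 1)" "A x \<in> cochains Xt q" by auto
    have "A (\<lambda>s. a * x s) = (\<lambda>s. a * A x s)" using Alin unfolding lin_map_def by blast
    then show "(\<lambda>s. a * x s) \<in> {e \<in> cochains Xtp (q + 1). A e \<in> cochains Xt q}"
      using fv.subspace_scale[OF cochains_subspace x(1)] fv.subspace_scale[OF cochains_subspace x(2)] by simp
  qed
  have Psupp: "P \<subseteq> supp Xtp" unfolding PA using cochains_supp[OF order_refl] by blast
  define E where "E = eth Xt Xtp \<rho> q"
  have EA: "E = adjoint_on Xtp P A" unfolding E_def eth_def P_def A_def Cq_def ..
  have E': "eth Xt Xtp \<rho>' q = (\<lambda>g s. c * E g s)"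
    unfolding eth_def P' A'[unfolded Cq_def] EA
    by (rule ext, rule adj_scale_op[OF fin Psub Psupp lin_map_mono[OF Alin subset_UNIV]])
  have Elin: "lin_map UNIV E" unfolding EA by (rule adj_lin[OF fin Psub Psupp lin_map_mono[OF Alin subset_UNIV]])
  have Ct: "fv.subspace (cochains Xt q)" "cochains Xt q \<subseteq> supp Xtp"
    by (rule cochains_subspace, rule cochains_supp[OF sub])
  have T1: "adjoint_on Xtp (cochains Xt q) (eth Xt Xtp \<rho>' q) (eth Xt Xtp \<rho>' q f)
     = (\<lambda>s. c * (c * adjoint_on Xtp (cochains Xt q) E (E f) s))"
  proof -
    have "adjoint_on Xtp (cochains Xt q) (eth Xt Xtp \<rho>' q) (eth Xt Xtp \<rho>' q f)
      = adjoint_on Xtp (cochains Xt q) (\<lambda>g s. c * E g s) (\<lambda>s. c * E f s)" unfolding E' ..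
    also have "\<dots> = (\<lambda>s. c * adjoint_on Xtp (cochains Xt q) E (\<lambda>s. c * E f s) s)"
      by (rule adj_scale_op[OF fin Ct lin_map_mono[OF Elin subset_UNIV]])
    also have "adjoint_on Xtp (cochains Xt q) E (\<lambda>s. c * E f s) = (\<lambda>s. c * adjoint_on Xtp (cochains Xt q) E (E f) s)"
      using adj_lin[OF fin Ct lin_map_mono[OF Elin subset_UNIV]] unfolding lin_map_def by simp
    finally show ?thesis .
  qed
  have Ct1: "fv.subspace (cochains Xt (q-1))" "cochains Xt (q-1) \<subseteq> supp Xtp"
    by (rule cochains_subspace, rule cochains_supp[OF sub])
  have T2: "coboundary Xt \<rho>' (q - 1) (adjoint_on Xtp (cochains Xt (q - 1)) (coboundary Xt \<rho>' (q - 1)) f)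
     = (\<lambda>s. c * (c * coboundary Xt \<rho> (q - 1) (adjoint_on Xtp (cochains Xt (q - 1)) (coboundary Xt \<rho> (q - 1)) f) s))"
  proof -
    have "adjoint_on Xtp (cochains Xt (q - 1)) (coboundary Xt \<rho>' (q - 1)) f
       = (\<lambda>s. c * adjoint_on Xtp (cochains Xt (q - 1)) (coboundary Xt \<rho> (q - 1)) f s)"
      unfolding d2 by (rule adj_scale_op[OF fin Ct1 cob_lin])
    moreover have "coboundary Xt \<rho> (q - 1) (\<lambda>s. c * g s) = (\<lambda>s. c * coboundary Xt \<rho> (q - 1) g s)" for g
      using cob_lin[of UNIV Xt \<rho> "q-1"] unfolding lin_map_def by blast
    ultimately show ?thesis unfolding d2 by simp
  qed
  show ?thesis
  proof (rule ext)
    fix s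
    show "pers_laplacian Xt Xtp \<rho>' q f s = c^2 * pers_laplacian Xt Xtp \<rho> q f s"
      unfolding pers_laplacian_def plus_fun_apply T1 T2 E_def
      apply (cases "q = 0")
       apply (simp only: if_True if_False zero_fun_apply)
       apply (simp add: power2_eq_square)
      apply (simp only: if_True if_False)
      apply (simp add: power2_eq_square distrib_left)
      done
  qed
qed

lemma eig_eq:
  assumes L: "\<And>f. L' f = (\<lambda>s. c^2 * L f s)" and c: "(c::real) \<noteq> 0"
  shows "eigenspace_on V L' (c^2 * mu) = eigenspace_on V L mu"
proof -
  have "L' f = (\<lambda>s. c^2 * mu * f s) \<longleftrightarrow> L f = (\<lambda>s. mu * f s)" for f
    unfolding L fun_eq_iff using c by (simp add: mult.assoc)
  then show ?thesis unfolding eigenspace_on_def by blast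
qed

theorem mainTheorem5:
  fixes Xt Xtp :: "'v list set" and lab :: "'v \<Rightarrow> real" and F :: "'v list \<Rightarrow> real"
    and c :: real and q :: nat
  assumes "simplicial_complex Xt" and "simplicial_complex Xtp" and "Xt \<subseteq> Xtp"
    and "\<forall>v\<in>vertices Xtp. lab v \<noteq> 0"
    and "\<forall>s\<in>Xtp. F s \<noteq> 0"
    and "c \<noteq> 0"
  shows "spectrum_on (cochains Xt q)
           (pers_laplacian Xt Xtp (labeled_restr (\<lambda>v. c * lab v) F) q)
         = (\<lambda>x. c^2 * x) ` spectrum_on (cochains Xt q) (pers_laplacian Xt Xtp (labeled_restr lab F) q)
       \<and> (\<forall>mu. eig_mult (cochains Xt q) (pers_laplacian Xt Xtp (labeled_restr (\<lambda>v. c * lab v) F) q) (c^2 * mu)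
              = eig_mult (cochains Xt q) (pers_laplacian Xt Xtp (labeled_restr lab F) q) mu)"
proof -
  have fin: "finite Xtp" using assms(2) unfolding simplicial_complex_def by blast
  have L: "\<And>f. pers_laplacian Xt Xtp (labeled_restr (\<lambda>v. c * lab v) F) q f
      = (\<lambda>s. c^2 * pers_laplacian Xt Xtp (labeled_restr lab F) q f s)"
    by (rule lap_scale[OF fin assms(3) assms(6) cob_scale[OF assms(2)] cob_scale[OF assms(1)]])
  note E = eig_eq[OF L assms(6)]
  have c2: "c^2 \<noteq> 0" using assms(6) by simp
  have S: "spectrum_on (cochains Xt q) (pers_laplacian Xt Xtp (labeled_restr (\<lambda>v. c * lab v) F) q)
         = (\<lambda>x. c^2 * x) ` spectrum_on (cochains Xt q) (pers_laplacian Xt Xtp (labeled_restr lab F) q)"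
  proof (intro set_eqI iffI)
    fix x assume "x \<in> spectrum_on (cochains Xt q) (pers_laplacian Xt Xtp (labeled_restr (\<lambda>v. c * lab v) F) q)"
    moreover have "x = c^2 * (x / c^2)" using c2 by simp
    ultimately show "x \<in> (\<lambda>x. c^2 * x) ` spectrum_on (cochains Xt q) (pers_laplacian Xt Xtp (labeled_restr lab F) q)"
      unfolding spectrum_on_def using E[where V="cochains Xt q" and mu="x / c^2"] by (intro image_eqI[of _ _ "x / c^2"]) auto
  next
    fix x assume "x \<in> (\<lambda>x. c^2 * x) ` spectrum_on (cochains Xt q) (pers_laplacian Xt Xtp (labeled_restr lab F) q)"
    then obtain y where "x = c^2 * y" "y \<in> spectrum_on (cochains Xt q) (pers_laplacian Xt Xtp (labeled_restr lab F) q)" by blast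
    then show "x \<in> spectrum_on (cochains Xt q) (pers_laplacian Xt Xtp (labeled_restr (\<lambda>v. c * lab v) F) q)"
      unfolding spectrum_on_def using E[where V="cochains Xt q" and mu=y] by auto
  qed
  show ?thesis using S E unfolding eig_mult_def by simp
qed

end
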